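(* Let $r:\mathbb{R}\to\mathbb{R}$ and let $\pi^m(a)=\sum_{k=1}^Nw_k\pi^{c_k}(a)$ with $\pi^{c_k}(a)=\mathcal N(a;\mu_k,\sigma_k^2)$, parameters $\theta=(\mu_1,\sigma_1,\dots,\mu_N,\sigma_N,w_1,\dots,w_N)$. Let $\hat\partial^{LR}_{\vartheta}J(\pi^m)=\partial_\vartheta\log\pi^m(A)\,r(A)$ with $A\sim\pi^m$, and for a single component let $\hat\partial^{LR}_{\vartheta_k}J(\pi^{c_k})=\partial_{\vartheta_k}\log\pi^{c_k}(A)\,r(A)$. Let $\rho_k(A)=\pi^{c_k}(A)/\pi^m(A)$. Then for each $k$ and each $\vartheta_k\in\{\mu_k,\sigma_k\}$, $$\mathbb{V}_{\pi^m(A)}\big(\hat\partial^{LR}_{\vartheta_k}J(\pi^m)\big)=w_k^2\,\mathbb{V}_{\pi^m(A)}\big(\rho_k(A)\,\hat\partial^{LR}_{\vartheta_k}J(\pi^{c_k})\big),\qquad \mathbb{V}_{\pi^m(A)}\big(\hat\partial^{LR}_{w_k}J(\pi^m)\big)=\mathbb{V}_{\pi^m(A)}\big(\rho_k(A)r(A)\big).$$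
   Context: Bandit setting with objective $J(\pi)=\mathbb{E}_{a\sim\pi}[r(a)]$. $\mathcal N(a;\mu,\sigma^2)$ is the Gaussian density with mean $\mu$ and standard deviation $\sigma$. The weights $w_k$ are treated as free coordinates when differentiating. $\mathbb{V}_q$ denotes variance under $A\sim q$. *)

theory Defs
  imports "HOL-Probability.Probability"
begin

definition mix_density :: "nat \<Rightarrow> (nat \<Rightarrow> real) \<Rightarrow> (nat \<Rightarrow> real) \<Rightarrow> (nat \<Rightarrow> real) \<Rightarrow> real \<Rightarrow> real" where
  "mix_density N mu sd w a = (\<Sum>k<N. w k * normal_density (mu k) (sd k) a)"

definition expect_dens :: "(real \<Rightarrow> real) \<Rightarrow> (real \<Rightarrow> real) \<Rightarrow> real" where
  "expect_dens q X = integral\<^sup>L (density lborel (\<lambda>a. ennreal (q a))) X"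

definition var_dens :: "(real \<Rightarrow> real) \<Rightarrow> (real \<Rightarrow> real) \<Rightarrow> real" where
  "var_dens q X = expect_dens q (\<lambda>a. (X a - expect_dens q X)\<^sup>2)"

end

theory Submission imports Defs begin
lemma nd_mu: assumes "s > 0" shows "\<exists>D. ((\<lambda>x. normal_density x s a) has_real_derivative D) (at m)"
  unfolding normal_density_def using assms by (intro exI) (auto intro!: derivative_eq_intros)
lemma nd_sd: assumes "s > 0" shows "\<exists>D. ((\<lambda>x. normal_density m x a) has_real_derivative D) (at s)"
proof -
  have "pi * s^2 > 0" using assms by simp
  then show ?thesis
    unfolding normal_density_def using assms
    apply (intro exI)
    apply (auto intro!: derivative_eq_intros)
    using \<open>pi * s^2 > 0\<close> by linarith
qed

lemma deriv_ln_affine: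
  assumes "(g has_real_derivative D) (at x0)" "C + c * g x0 > 0"
  shows "deriv (\<lambda>x. ln (C + c * g x)) x0 = c * D / (C + c * g x0)"
  apply (rule DERIV_imp_deriv)
  using assms by (auto intro!: derivative_eq_intros)

lemma var_scale: "var_dens q (\<lambda>a. c * X a) = c^2 * var_dens q X"
proof -
  have e: "expect_dens q (\<lambda>a. c * X a) = c * expect_dens q X"
    unfolding expect_dens_def by simp
  have "(\<lambda>a. (c * X a - c * expect_dens q X)\<^sup>2) = (\<lambda>a. c^2 * (X a - expect_dens q X)\<^sup>2)"
    by (auto simp: power2_eq_square algebra_simps)
  then show ?thesis unfolding var_dens_def e by (simp add: expect_dens_def)
qed

lemma mix_split:
  assumes "k < N"
  shows "mix_density N m s w a = (\<Sum>j\<in>{..<N}-{k}. w j * normal_density (m j) (s j) a) + w k * normal_density (m k) (s k) a"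
  unfolding mix_density_def using assms
  by (subst sum.remove[of _ k]) auto

lemma mix_pos:
  assumes "k < N" "\<And>j. j < N \<Longrightarrow> sd j > 0" "\<And>j. j < N \<Longrightarrow> w j > 0"
  shows "mix_density N mu sd w a > 0"
  unfolding mix_density_def
  using assms by (intro sum_pos) (auto simp: normal_density_pos)

theorem lemmaC6:
  fixes N :: nat and mu sd w :: "nat \<Rightarrow> real" and r :: "real \<Rightarrow> real" and k :: nat
  assumes "k < N"
    and "\<And>j. j < N \<Longrightarrow> sd j > 0"
    and "\<And>j. j < N \<Longrightarrow> w j > 0"
    and "(\<Sum>j<N. w j) = 1"
  defines "pm \<equiv> mix_density N mu sd w"
    and "rho \<equiv> (\<lambda>a. normal_density (mu k) (sd k) a / mix_density N mu sd w a)"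
  shows
    "var_dens pm (\<lambda>a. deriv (\<lambda>x. ln (mix_density N (mu(k := x)) sd w a)) (mu k) * r a)
       = (w k)\<^sup>2 * var_dens pm (\<lambda>a. rho a *
           (deriv (\<lambda>x. ln (normal_density x (sd k) a)) (mu k) * r a))
   \<and> var_dens pm (\<lambda>a. deriv (\<lambda>x. ln (mix_density N mu (sd(k := x)) w a)) (sd k) * r a)
       = (w k)\<^sup>2 * var_dens pm (\<lambda>a. rho a *
           (deriv (\<lambda>x. ln (normal_density (mu k) x a)) (sd k) * r a))
   \<and> var_dens pm (\<lambda>a. deriv (\<lambda>x. ln (mix_density N mu sd (w(k := x)) a)) (w k) * r a)
       = var_dens pm (\<lambda>a. rho a * r a)"
proof -
  have sdk: "sd k > 0" and wk: "w k > 0" using assms(1-3) by auto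
  define C where "C a = (\<Sum>j\<in>{..<N}-{k}. w j * normal_density (mu j) (sd j) a)" for a
  have M: "mix_density N mu sd w a = C a + w k * normal_density (mu k) (sd k) a" for a
    unfolding C_def using mix_split[OF assms(1)] .
  have Mpos: "mix_density N mu sd w a > 0" for a using mix_pos[OF assms(1-3)] .
  have gpos: "normal_density (mu k) (sd k) a > 0" for a using sdk by (simp add: normal_density_pos)
  have 1: "deriv (\<lambda>x. ln (mix_density N (mu(k := x)) sd w a)) (mu k) * r a
      = w k * (rho a * (deriv (\<lambda>x. ln (normal_density x (sd k) a)) (mu k) * r a))" for a
  proof -
    obtain D where D: "((\<lambda>x. normal_density x (sd k) a) has_real_derivative D) (at (mu k))"
      using nd_mu[OF sdk] by blast
    have f: "mix_density N (mu(k := x)) sd w a = C a + w k * normal_density x (sd k) a" for x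
      unfolding C_def by (subst mix_split[OF assms(1)]) auto
    have d1: "deriv (\<lambda>x. ln (mix_density N (mu(k := x)) sd w a)) (mu k) = w k * D / mix_density N mu sd w a"
      unfolding M using deriv_ln_affine[OF D, of "C a" "w k"] Mpos[of a] M[of a] by (simp only: f)
    have d2: "deriv (\<lambda>x. ln (normal_density x (sd k) a)) (mu k) = D / normal_density (mu k) (sd k) a"
      using deriv_ln_affine[OF D, of 0 1] gpos[of a] by simp
    show ?thesis unfolding d1 d2 rho_def using gpos[of a] Mpos[of a]
      by (simp add: field_simps)
  qed
  have 2: "deriv (\<lambda>x. ln (mix_density N mu (sd(k := x)) w a)) (sd k) * r a
      = w k * (rho a * (deriv (\<lambda>x. ln (normal_density (mu k) x a)) (sd k) * r a))" for a
  proof -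
    obtain D where D: "((\<lambda>x. normal_density (mu k) x a) has_real_derivative D) (at (sd k))"
      using nd_sd[OF sdk] by blast
    have f: "mix_density N mu (sd(k := x)) w a = C a + w k * normal_density (mu k) x a" for x
      unfolding C_def by (subst mix_split[OF assms(1)]) auto
    have d1: "deriv (\<lambda>x. ln (mix_density N mu (sd(k := x)) w a)) (sd k) = w k * D / mix_density N mu sd w a"
      unfolding M using deriv_ln_affine[OF D, of "C a" "w k"] Mpos[of a] M[of a] by (simp only: f)
    have d2: "deriv (\<lambda>x. ln (normal_density (mu k) x a)) (sd k) = D / normal_density (mu k) (sd k) a"
      using deriv_ln_affine[OF D, of 0 1] gpos[of a] by simp
    show ?thesis unfolding d1 d2 rho_def using gpos[of a] Mpos[of a]
      by (simp add: field_simps)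
  qed
  have 3: "deriv (\<lambda>x. ln (mix_density N mu sd (w(k := x)) a)) (w k) * r a = rho a * r a" for a
  proof -
    have D: "((\<lambda>x. x) has_real_derivative 1) (at (w k))" by (rule DERIV_ident)
    have f: "mix_density N mu sd (w(k := x)) a = C a + normal_density (mu k) (sd k) a * x" for x
      unfolding C_def by (subst mix_split[OF assms(1)]) auto
    have d1: "deriv (\<lambda>x. ln (mix_density N mu sd (w(k := x)) a)) (w k) = normal_density (mu k) (sd k) a / mix_density N mu sd w a"
      unfolding M using deriv_ln_affine[OF D, of "C a" "normal_density (mu k) (sd k) a"] Mpos[of a] M[of a]
      by (simp only: f) (metis mult.commute mult_1_right)
    show ?thesis unfolding d1 rho_def ..
  qed
  show ?thesis
    unfolding 1 2 3 by (simp add: var_scale)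
qed
end
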